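(* Assume $f$ is backward contracting, and for each $\delta>0$ let $W_\delta$ be the pull-back of $\tilde B(2\delta)$ by $f^{n(\delta)-1}$ containing $c$. Then for every sufficiently small $\delta>0$ we have $R(\delta)\ge\delta/\mathrm{diam}(W_\delta)$.
   Context: Standing setting: $d\ge2$, $c\in\mathbb{C}$, $f(z)=z^d+c$, critical point $0$ non-periodic and recurrent, critical value $c$. $\tilde B(\delta)=B(0,\delta^{1/d})$; a pull-back of $V$ by $f^n$ is a connected component of $f^{-n}(V)$. $R(\delta)=\inf\{\delta/\mathrm{diam}(U): U$ a pull-back of $\tilde B(\delta)$ by some $f^n$, $n\ge0$, with $c\in U\}$. $r(\delta)=\sup\{r>0:$ every pull-back $W$ of $\tilde B(\delta r)$ with $\mathrm{dist}(W,c)\le\delta$ has $\mathrm{diam}(W)<\delta\}$; $f$ is backward contracting if $r(\delta)\to\infty$ as $\delta\to0$. $n(\delta)$ is the minimal integer $n\ge1$ with $f^n(0)\in\tilde B(\delta)$. *)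

theory Defs
  imports "HOL-Analysis.Analysis"
begin

definition unicrit :: "nat \<Rightarrow> complex \<Rightarrow> complex \<Rightarrow> complex" where
  "unicrit d c z = z ^ d + c"

definition Btilde :: "nat \<Rightarrow> real \<Rightarrow> complex set" where
  "Btilde d \<delta> = ball 0 (root d \<delta>)"

definition pullback :: "nat \<Rightarrow> complex \<Rightarrow> nat \<Rightarrow> complex set \<Rightarrow> complex set \<Rightarrow> bool" where
  "pullback d c n V U \<longleftrightarrow>
     U \<in> components ((unicrit d c ^^ n) -` V)"

definition crit_nonperiodic :: "nat \<Rightarrow> complex \<Rightarrow> bool" where
  "crit_nonperiodic d c \<longleftrightarrow> (\<forall>n\<ge>1. (unicrit d c ^^ n) 0 \<noteq> 0)"

definition crit_recurrent :: "nat \<Rightarrow> complex \<Rightarrow> bool" where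
  "crit_recurrent d c \<longleftrightarrow>
     (\<forall>\<epsilon>>0. \<forall>N. \<exists>n>N. norm ((unicrit d c ^^ n) 0) < \<epsilon>)"

definition Rfun :: "nat \<Rightarrow> complex \<Rightarrow> real \<Rightarrow> real" where
  "Rfun d c \<delta> = Inf {\<delta> / diameter U | U n. pullback d c n (Btilde d \<delta>) U \<and> c \<in> U}"

definition rfun :: "nat \<Rightarrow> complex \<Rightarrow> real \<Rightarrow> ereal" where
  "rfun d c \<delta> = Sup (ereal ` {r. r > 0 \<and>
      (\<forall>W n. pullback d c n (Btilde d (\<delta> * r)) W \<and> infdist c W \<le> \<delta>
              \<longrightarrow> diameter W < \<delta>)})"

definition backward_contracting :: "nat \<Rightarrow> complex \<Rightarrow> bool" where
  "backward_contracting d c \<longleftrightarrow> ((\<lambda>\<delta>. rfun d c \<delta>) \<longlongrightarrow> \<infinity>) (at_right 0)"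

definition nfun :: "nat \<Rightarrow> complex \<Rightarrow> real \<Rightarrow> nat" where
  "nfun d c \<delta> = (LEAST n. n \<ge> 1 \<and> (unicrit d c ^^ n) 0 \<in> Btilde d \<delta>)"

definition Wset :: "nat \<Rightarrow> complex \<Rightarrow> real \<Rightarrow> complex set" where
  "Wset d c \<delta> = connected_component_set
      ((unicrit d c ^^ (nfun d c \<delta> - 1)) -` Btilde d (2 * \<delta>)) c"

end

theory Submission
  imports Defs
begin

lemma cont_iter: "continuous_on UNIV (unicrit d c ^^ n)"
proof (induction n)
  case 0 then show ?case by (simp add: continuous_on_id)
next
  case (Suc n)
  have "continuous_on UNIV (unicrit d c)" unfolding unicrit_def
    by (intro continuous_intros)
  then show ?case using Suc by (simp add: continuous_on_compose2[of UNIV "unicrit d c"])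
qed

lemma bounded_pre1:
  assumes "d \<ge> 1" "bounded S"
  shows "bounded (unicrit d c -` S)"
proof -
  obtain R where R: "\<And>x. x \<in> S \<Longrightarrow> norm x \<le> R" using assms(2) bounded_iff by blast
  have "norm z \<le> max 1 (R + norm c)" if "z \<in> unicrit d c -` S" for z
  proof (rule ccontr)
    assume "\<not> ?thesis"
    hence z1: "norm z > 1" and z2: "norm z > R + norm c" by auto
    have "norm z \<le> norm z ^ d" using z1 assms(1)
      by (metis less_imp_le power_increasing power_one_right)
    also have "norm z ^ d = norm (z ^ d)" by (simp add: norm_power)
    also have "\<dots> \<le> norm (z ^ d + c) + norm c" by (metis add_diff_cancel norm_triangle_ineq4)
    also have "norm (z ^ d + c) \<le> R" using R that by (simp add: unicrit_def)
    finally show False using z2 by simp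
  qed
  then show ?thesis unfolding bounded_iff by blast
qed

lemma bounded_pre:
  assumes "d \<ge> 1" "bounded S"
  shows "bounded ((unicrit d c ^^ n) -` S)"
proof (induction n)
  case 0 then show ?case using assms by simp
next
  case (Suc n)
  have eq: "(unicrit d c ^^ Suc n) -` S = unicrit d c -` ((unicrit d c ^^ n) -` S)"
    by (auto simp: funpow_swap1)
  show ?case unfolding eq by (rule bounded_pre1[OF assms(1) Suc.IH])
qed

lemma Btilde_iff:
  assumes "d \<ge> 1" "t > 0"
  shows "z \<in> Btilde d t \<longleftrightarrow> norm z ^ d < t"
proof -
  have "z \<in> Btilde d t \<longleftrightarrow> norm z < root d t" by (simp add: Btilde_def)
  also have "\<dots> \<longleftrightarrow> norm z ^ d < root d t ^ d"
    using assms by (metis norm_ge_zero power_less_imp_less_base power_strict_mono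
        real_root_gt_zero less_imp_le not_one_le_zero le0 neq0_conv)
  also have "root d t ^ d = t" using assms by (simp add: real_root_pow_pos)
  finally show ?thesis .
qed

lemma Btilde_mono: "s \<le> t \<Longrightarrow> d \<ge> 1 \<Longrightarrow> Btilde d s \<subseteq> Btilde d t"
  unfolding Btilde_def by (intro subset_ball) (simp add: real_root_le_iff)

lemma core:
  assumes d: "d \<ge> 1" and dp: "\<delta> > 0" and rec: "crit_recurrent d c"
    and rf: "rfun d c \<delta> > 1"
  shows "Rfun d c \<delta> \<ge> \<delta> / diameter (Wset d c \<delta>)"
proof -
  define F where "F = (\<lambda>n. unicrit d c ^^ n)"
  define B where "B = Btilde d \<delta>"
  have Fsuc: "F (Suc n) x = F n (unicrit d c x)" for n x
    unfolding F_def by (simp add: funpow_Suc_right del: funpow.simps)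
  have Fsuc': "F (Suc n) x = unicrit d c (F n x)" for n x
    unfolding F_def by simp
  have Fadd: "F (a + b) x = F a (F b x)" for a b x
    unfolding F_def by (simp add: funpow_add)
  have F0c: "unicrit d c 0 = c" using d by (simp add: unicrit_def)
  obtain r where r1: "r > 1" and rP: "\<And>W n. pullback d c n (Btilde d (\<delta> * r)) W \<Longrightarrow>
      infdist c W \<le> \<delta> \<Longrightarrow> diameter W < \<delta>"
  proof -
    have "ereal 1 < Sup (ereal ` {r. r > 0 \<and>
      (\<forall>W n. pullback d c n (Btilde d (\<delta> * r)) W \<and> infdist c W \<le> \<delta>
              \<longrightarrow> diameter W < \<delta>)})" using rf by (simp add: rfun_def one_ereal_def)
    then show ?thesis using that by (auto simp: less_Sup_iff)
  qed
  define X where "X = {\<delta> / diameter U | U n. pullback d c n B U \<and> c \<in> U}"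
  have RX: "Rfun d c \<delta> = Inf X" unfolding Rfun_def X_def B_def by simp
  define W where "W = Wset d c \<delta>"
  have Xne: "X \<noteq> {}"
  proof -
    have "root d \<delta> > 0" using d dp by simp
    then obtain n where n: "n > 0" "norm (F n 0) < root d \<delta>"
      using rec unfolding crit_recurrent_def F_def by blast
    obtain k where k: "n = Suc k" using n(1) not0_implies_Suc by blast
    have "F k c \<in> B" using n k Fsuc[of k 0] F0c by (simp add: B_def Btilde_def)
    hence "c \<in> F k -` B" by simp
    hence "connected_component_set (F k -` B) c \<in> components (F k -` B)"
      by (simp add: components_def)
    moreover have "c \<in> connected_component_set (F k -` B) c"
      using \<open>c \<in> F k -` B\<close> by simp
    ultimately show ?thesis unfolding X_def pullback_def F_def by blast
  qed
  have Xb: "\<delta> / diameter W \<le> x" if "x \<in> X" for x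
  proof -
    obtain U n where U: "x = \<delta> / diameter U" "U \<in> components (F n -` B)" "c \<in> U"
      using \<open>x \<in> X\<close> unfolding X_def pullback_def F_def by blast
    have Usub: "U \<subseteq> F n -` B" using U(2) in_components_subset by blast
    have Ucon: "connected U" using U(2) in_components_connected by blast
    have openB: "open B" unfolding B_def Btilde_def by simp
    have "open (F n -` B)"
      using cont_iter[where d=d and c=c and n=n] openB unfolding F_def by (simp add: continuous_on_open_vimage)
    hence Uopen: "open U" using U(2) open_components by blast
    have Ubd: "bounded U" using bounded_pre[OF d, where S=B and c=c and n=n] Usub
      unfolding F_def B_def Btilde_def by (meson bounded_ball bounded_subset)
    have ex: "F (Suc n) 0 \<in> B" using Usub U(3) Fsuc[of n 0] F0c by auto
    define N where "N = nfun d c \<delta>"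
    have N: "N \<ge> 1 \<and> F N 0 \<in> B" "N \<le> Suc n"
      unfolding N_def nfun_def F_def B_def
      using ex unfolding F_def B_def
      by (auto intro: LeastI2[of _ "Suc n"] Least_le)
    define m where "m = N - 1"
    have Nm: "N = Suc m" using N(1) m_def by simp
    have mn: "m \<le> n" using N(2) Nm by simp
    have Fmc: "F m c = F N 0" using Nm Fsuc[of m 0] F0c by simp
    have key: "F m u \<in> Btilde d (2 * \<delta>)" if "u \<in> U" for u
    proof (cases "m = n")
      case True
      then show ?thesis using Usub that Btilde_mono[of \<delta> "2*\<delta>" d] dp d
        unfolding B_def by auto
    next
      case False
      define j where "j = n - m - 1"
      have nj: "n = j + Suc m" using False mn j_def by simp
      define T where "T = F (Suc m) ` U"
      have Tcon: "connected T" unfolding T_def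
        using cont_iter[where d=d and c=c and n="Suc m"] Ucon unfolding F_def
        by (meson connected_continuous_image continuous_on_subset subset_UNIV)
      have TB: "T \<subseteq> F j -` B" unfolding T_def
      proof
        fix y assume "y \<in> F (Suc m) ` U"
        then obtain u where "u \<in> U" "y = F (Suc m) u" by blast
        then show "y \<in> F j -` B" using Usub Fadd[of j "Suc m" u] nj by auto
      qed
      define p where "p = F (Suc m) c"
      have pT: "p \<in> T" using U(3) unfolding p_def T_def by simp
      have pc: "dist c p < \<delta>"
      proof -
        have "p = unicrit d c (F N 0)" unfolding p_def using Fsuc'[of m c] Fmc by simp
        hence "dist c p = norm (F N 0) ^ d"
          by (simp add: unicrit_def dist_norm norm_power)
        also have "\<dots> < \<delta>" using N(1) Btilde_iff[OF d dp] unfolding B_def by blast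
        finally show ?thesis .
      qed
      define B' where "B' = Btilde d (\<delta> * r)"
      have BB': "B \<subseteq> B'" unfolding B_def B'_def using r1 dp d
        by (intro Btilde_mono) auto
      define V where "V = connected_component_set (F j -` B') p"
      have pV: "p \<in> F j -` B'" using pT TB BB' by auto
      have Vcomp: "pullback d c j B' V"
        unfolding pullback_def V_def using pV by (simp add: components_def F_def)
      have "infdist c V \<le> dist c p" using pV unfolding V_def by (intro infdist_le) simp
      hence diamV: "diameter V < \<delta>" using rP[of j V] Vcomp pc unfolding B'_def by simp
      have Vbd: "bounded V" unfolding V_def
        using bounded_pre[OF d, where S=B' and c=c and n=j] connected_component_subset
        unfolding F_def B'_def Btilde_def by (meson bounded_ball bounded_subset)
      have TV: "T \<subseteq> V" unfolding V_def
        using connected_component_maximal[OF pT Tcon] TB BB' by blast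
      have q: "F (Suc m) u \<in> V" using TV that unfolding T_def by auto
      have "dist p (F (Suc m) u) \<le> diameter V"
        using diameter_bounded_bound[OF Vbd _ q] pT TV by blast
      hence "dist c (F (Suc m) u) < 2 * \<delta>" using pc diamV dist_triangle[of c "F (Suc m) u" p]
        by linarith
      hence "norm (F m u) ^ d < 2 * \<delta>"
        using Fsuc'[of m u] by (simp add: unicrit_def dist_norm norm_power)
      then show ?thesis using Btilde_iff[OF d, of "2*\<delta>"] dp by simp
    qed
    have Wdef: "W = connected_component_set (F m -` Btilde d (2 * \<delta>)) c"
      unfolding W_def Wset_def F_def m_def N_def by simp
    have UW: "U \<subseteq> W" unfolding Wdef
      by (rule connected_component_maximal[OF U(3) Ucon]) (use key in auto)
    have Wbd: "bounded W" unfolding Wdef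
      using bounded_pre[OF d, where S="Btilde d (2 * \<delta>)" and c=c and n=m] connected_component_subset
      unfolding F_def Btilde_def by (meson bounded_ball bounded_subset)
    have dUW: "diameter U \<le> diameter W" using diameter_subset[OF UW Wbd] .
    obtain e where e: "e > 0" "ball c e \<subseteq> U" using Uopen U(3) open_contains_ball by blast
    have "c + of_real (e/2) \<in> U" using e by (auto simp: dist_norm)
    hence "dist c (c + of_real (e/2)) \<le> diameter U"
      using diameter_bounded_bound[OF Ubd U(3)] by blast
    hence dU: "diameter U > 0" using e by (simp add: dist_norm)
    show ?thesis unfolding U(1) using dUW dU dp
      by (simp add: divide_left_mono)
  qed
  show ?thesis unfolding RX W_def[symmetric] using Xne Xb by (intro cInf_greatest) auto
qed

theorem lemma4p3:
  fixes d :: nat and c :: complex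
  assumes "d \<ge> 2"
    and "crit_nonperiodic d c"
    and "crit_recurrent d c"
    and "backward_contracting d c"
  shows "\<forall>\<^sub>F \<delta> in at_right (0::real). Rfun d c \<delta> \<ge> \<delta> / diameter (Wset d c \<delta>)"
proof -
  have e1: "\<forall>\<^sub>F \<delta> in at_right (0::real). rfun d c \<delta> > 1"
    using assms(4) unfolding backward_contracting_def
    by (rule order_tendstoD(1)) simp
  have e2: "\<forall>\<^sub>F \<delta> in at_right (0::real). \<delta> > 0" by (rule eventually_at_right_less)
  show ?thesis using e1 e2
    by eventually_elim (rule core, use assms in auto)
qed

end
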